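(* Let $P$ and $Q$ be disjoint polytopes in $\mathbb{R}^d$ such that $P$ and $-Q$ are Minkowski equivalent. Then there is a hyperplane separating $P$ and $Q$ which is parallel to a facet of $P$.
   Context: Two polytopes are Minkowski equivalent if they have the same normal fan (the collection of normal cones of their faces). Here $-Q = \{-q : q \in Q\}$. A hyperplane $H$ separates $P$ and $Q$ if $P$ and $Q$ lie in the two opposite closed half-spaces determined by $H$ (here it can be taken to be strict separation: there is a normal vector $y$ and a real $c$ with $\max_{x\in P}\langle x,y\rangle < c < \min_{x\in Q}\langle x,y\rangle$); it is parallel to a facet of $P$ if its normal vector is normal to that facet. *)

theory Defs
  imports "HOL-Analysis.Analysis"
begin

definition normal_cone :: "'a::euclidean_space set \<Rightarrow> 'a set \<Rightarrow> 'a set" where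
  "normal_cone P F = {y. \<forall>x\<in>F. \<forall>z\<in>P. z \<bullet> y \<le> x \<bullet> y}"

definition normal_fan :: "'a::euclidean_space set \<Rightarrow> 'a set set" where
  "normal_fan P = {normal_cone P F | F. F face_of P \<and> F \<noteq> {}}"

definition minkowski_equivalent :: "'a::euclidean_space set \<Rightarrow> 'a set \<Rightarrow> bool" where
  "minkowski_equivalent P Q \<longleftrightarrow> normal_fan P = normal_fan Q"

text \<open>y is normal to a facet of P: the face of P exposed by y is a facet of P.
  For a 0-dimensional polytope (a point) the only facet is the empty face, whose
  normal cone is the whole space; this convention is encoded by the first disjunct.\<close>
definition facet_normal :: "'a::euclidean_space set \<Rightarrow> 'a \<Rightarrow> bool" where
  "facet_normal P y \<longleftrightarrow> aff_dim P = 0 \<or>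
     (\<exists>F. F facet_of P \<and> F = {x\<in>P. \<forall>z\<in>P. z \<bullet> y \<le> x \<bullet> y})"

end

theory Submission
  imports Defs
begin

definition E :: "'a::euclidean_space set \<Rightarrow> 'a \<Rightarrow> 'a set" where
  "E S y = {x\<in>S. \<forall>z\<in>S. z \<bullet> y \<le> x \<bullet> y}"

lemma E_sub: "E S y \<subseteq> S" by (auto simp: E_def)

lemma E_ne: assumes "compact S" "S \<noteq> {}" shows "E S y \<noteq> {}"
proof -
  have "continuous_on S (\<lambda>x. x \<bullet> y)" by (intro continuous_intros)
  then obtain x where "x \<in> S" "\<forall>z\<in>S. z \<bullet> y \<le> x \<bullet> y"
    using continuous_attains_sup[OF assms] by blast
  then show ?thesis by (auto simp: E_def)
qed

lemma E_face: assumes "convex S" shows "E S y face_of S"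
proof (cases "E S y = {}")
  case True then show ?thesis by simp
next
  case False
  then obtain p where p: "p \<in> E S y" by blast
  then have eq: "E S y = S \<inter> {x. y \<bullet> x = y \<bullet> p}"
    by (auto simp: E_def inner_commute intro: order_antisym)
  have "\<And>x. x \<in> S \<Longrightarrow> y \<bullet> x \<le> y \<bullet> p" using p by (auto simp: E_def inner_commute)
  then show ?thesis unfolding eq by (rule face_of_Int_supporting_hyperplane_le[OF assms])
qed

lemma nc_E: assumes "F \<subseteq> S" shows "normal_cone S F = {z. F \<subseteq> E S z}"
  using assms by (auto simp: normal_cone_def E_def)

lemma nc_least:
  assumes "F \<subseteq> S" "y \<in> normal_cone S F"
  shows "normal_cone S (E S y) \<subseteq> normal_cone S F"
proof -
  have "F \<subseteq> E S y" using assms by (auto simp: nc_E)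
  then show ?thesis using assms E_sub[of S] by (auto simp: nc_E)
qed

lemma fan_eq:
  assumes "normal_fan S = normal_fan T" "compact S" "convex S" "S \<noteq> {}"
    "compact T" "convex T" "T \<noteq> {}"
  shows "normal_cone S (E S y) = normal_cone T (E T y)"
proof -
  have ins: "normal_cone S (E S y) \<in> normal_fan S" if "compact S" "convex S" "S \<noteq> {}" for S :: "'a set"
    using E_ne[OF that(1) that(3)] E_face[OF that(2)] that unfolding normal_fan_def by blast
  have yin: "y \<in> normal_cone S (E S y)" for S :: "'a set" by (auto simp: nc_E E_sub)
  have sub: "normal_cone T (E T y) \<subseteq> normal_cone S (E S y)"
    if "normal_fan S = normal_fan T" "compact S" "convex S" "S \<noteq> {}" for S T :: "'a set"
  proof -
    have "normal_cone S (E S y) \<in> normal_fan T" using ins[OF that(2-4)] that(1) by simp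
    then obtain G where G: "G face_of T" "normal_cone S (E S y) = normal_cone T G"
      unfolding normal_fan_def by blast
    show ?thesis using nc_least[of G T y] G yin[of S] face_of_imp_subset[OF G(1)] by simp
  qed
  show ?thesis using sub[of S T] sub[of T S] assms by auto
qed

lemma star:
  assumes "normal_fan S = normal_fan T" "compact S" "convex S" "S \<noteq> {}"
    "compact T" "convex T" "T \<noteq> {}"
  shows "E S y \<subseteq> E S z \<longleftrightarrow> E T y \<subseteq> E T z"
  using fan_eq[OF assms, of y] E_sub[of S] E_sub[of T] by (auto simp: nc_E set_eq_iff)

lemma E_hyper:
  assumes "S \<subseteq> {x. a \<bullet> x \<le> b}" "S \<inter> {x. a \<bullet> x = b} \<noteq> {}"
  shows "E S a = S \<inter> {x. a \<bullet> x = b}"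
proof -
  obtain p where p: "p \<in> S" "a \<bullet> p = b" using assms(2) by blast
  show ?thesis
  proof
    show "E S a \<subseteq> S \<inter> {x. a \<bullet> x = b}"
    proof
      fix x assume x: "x \<in> E S a"
      then have "x \<in> S" "p \<bullet> a \<le> x \<bullet> a" using p by (auto simp: E_def)
      then show "x \<in> S \<inter> {x. a \<bullet> x = b}" using assms(1) p by (auto simp: inner_commute intro: order_antisym)
    qed
    show "S \<inter> {x. a \<bullet> x = b} \<subseteq> E S a" using assms(1) by (auto simp: E_def inner_commute)
  qed
qed

lemma E_shift:
  assumes "\<forall>p\<in>S. p \<bullet> l = k"
  shows "E S (t *\<^sub>R l + a) = E S a"
  using assms by (auto simp: E_def inner_add_right)


theorem lemma2p4:
  fixes P Q :: "'a::euclidean_space set"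
  assumes "polytope P" and "polytope Q" and "P \<noteq> {}" and "Q \<noteq> {}"
    and "P \<inter> Q = {}"
    and "minkowski_equivalent P (uminus ` Q)"
  shows "\<exists>y c. facet_normal P y \<and> (\<forall>x\<in>P. x \<bullet> y < c) \<and> (\<forall>x\<in>Q. c < x \<bullet> y)"
proof (rule ccontr)
  assume nog: "\<not> ?thesis"
  define Q' where "Q' = uminus ` Q"
  have polyQ': "polytope Q'" unfolding Q'_def
    using polytope_linear_image[OF linear_uminus assms(2)] by simp
  have cP: "compact P" "convex P" using assms(1) polytope_imp_compact polytope_imp_convex by auto
  have cQ: "compact Q" "convex Q" using assms(2) polytope_imp_compact polytope_imp_convex by auto
  have cQ': "compact Q'" "convex Q'" "Q' \<noteq> {}"
    using polyQ' polytope_imp_compact polytope_imp_convex assms(4) Q'_def by auto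
  have star': "\<And>y z. E P y \<subseteq> E P z \<longleftrightarrow> E Q' y \<subseteq> E Q' z"
    using star[OF _ cP assms(3) cQ'] assms(6) unfolding minkowski_equivalent_def Q'_def by blast
  have good: "(\<exists>c. (\<forall>x\<in>P. x \<bullet> y < c) \<and> (\<forall>x\<in>Q. c < x \<bullet> y)) \<longleftrightarrow> p \<bullet> y + q \<bullet> y < 0"
    if "p \<in> E P y" "q \<in> E Q' y" for y p q
  proof
    assume "\<exists>c. (\<forall>x\<in>P. x \<bullet> y < c) \<and> (\<forall>x\<in>Q. c < x \<bullet> y)"
    then obtain c where c: "\<forall>x\<in>P. x \<bullet> y < c" "\<forall>x\<in>Q. c < x \<bullet> y" by blast
    have "p \<in> P" "-q \<in> Q" using that E_sub unfolding Q'_def by force+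
    then show "p \<bullet> y + q \<bullet> y < 0" using c by force
  next
    assume lt: "p \<bullet> y + q \<bullet> y < 0"
    show "\<exists>c. (\<forall>x\<in>P. x \<bullet> y < c) \<and> (\<forall>x\<in>Q. c < x \<bullet> y)"
    proof (intro exI conjI ballI)
      fix x assume "x \<in> P" then have "x \<bullet> y \<le> p \<bullet> y" using that by (auto simp: E_def)
      then show "x \<bullet> y < (p \<bullet> y - q \<bullet> y) / 2" using lt by simp
    next
      fix x assume "x \<in> Q" then have "-x \<in> Q'" unfolding Q'_def by simp
      then have "(-x) \<bullet> y \<le> q \<bullet> y" using that by (auto simp: E_def)
      then show "(p \<bullet> y - q \<bullet> y) / 2 < x \<bullet> y" using lt by simp
    qed
  qed
  obtain y0 c0 where y0: "\<forall>x\<in>P. inner y0 x < c0" "\<forall>x\<in>Q. inner y0 x > c0"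
    using separating_hyperplane_compact_closed[OF cP(2) cP(1) assms(3) cQ(2) compact_imp_closed[OF cQ(1)] assms(5)]
    by blast
  have goody0: "\<exists>c. (\<forall>x\<in>P. x \<bullet> y0 < c) \<and> (\<forall>x\<in>Q. c < x \<bullet> y0)"
    using y0 by (auto simp: inner_commute)
  have "aff_dim P \<noteq> 0"
    using nog goody0 unfolding facet_normal_def by blast
  moreover have "aff_dim P \<ge> 0" using assms(3) aff_dim_empty[of P] aff_dim_geq[of P] by linarith
  ultimately have "0 < aff_dim P" by simp
  then obtain Fa where Fa: "Fa facet_of P" using polytope_facet_exists[OF assms(1)] by blast
  obtain a b where ab: "a \<noteq> 0" "P \<subseteq> {x. a \<bullet> x \<le> b}" "Fa = P \<inter> {x. a \<bullet> x = b}"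
    using facet_of_polyhedron[OF polytope_imp_polyhedron[OF assms(1)] Fa] by blast
  have EPa: "E P a = Fa" using E_hyper[OF ab(2)] ab(3) Fa by (auto simp: facet_of_def)
  define F where "F = E P y0"
  have Fne: "F \<noteq> {}" using E_ne[OF cP(1) assms(3)] F_def by simp
  have Fface: "F face_of P" using E_face[OF cP(2)] F_def by simp
  then have "convex F" using face_of_imp_convex by blast
  then obtain x0 where x0: "x0 \<in> rel_interior F" using Fne rel_interior_eq_empty by blast
  have x0F: "x0 \<in> F" using x0 rel_interior_subset by blast
  have x0P: "x0 \<in> P" using x0F F_def E_sub by blast
  obtain x' where x': "x' \<in> E Q' y0" using E_ne[OF cQ'(1) cQ'(3)] by blast
  define v where "v = x0 + x'"
  have key: "x0 \<in> E P z \<and> x' \<in> E Q' z" if "F \<subseteq> E P z" for z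
    using that star'[of y0 z] x0F x' F_def by blast
  have vy0: "v \<bullet> y0 < 0"
    using good[of x0 y0 x'] goody0 x0F x' F_def by (simp add: v_def inner_add_left)
  have goodz: "(\<exists>c. (\<forall>x\<in>P. x \<bullet> z < c) \<and> (\<forall>x\<in>Q. c < x \<bullet> z)) \<longleftrightarrow> v \<bullet> z < 0"
    if "F \<subseteq> E P z" for z
    using good[of x0 z x'] key[OF that] by (simp add: v_def inner_add_left)
  have facet_bad: "0 \<le> v \<bullet> z" if "facet_normal P z" "F \<subseteq> E P z" for z
    using nog goodz[OF that(2)] that(1) by force

  define S where "S = (\<lambda>p. p - x0) ` P"
  obtain v1 v2 where v1: "v1 \<in> span S" and v2: "\<And>w. w \<in> span S \<Longrightarrow> orthogonal v2 w"
    and vdec: "v = v1 + v2"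
    using orthogonal_subspace_decomp_exists[of S v] by blast
  have v20: "v2 = 0"
  proof (rule ccontr)
    assume v2ne: "v2 \<noteq> 0"
    define l where "l = - v2"
    have lconst: "\<forall>p\<in>P. p \<bullet> l = x0 \<bullet> l"
    proof
      fix p assume "p \<in> P"
      then have "p - x0 \<in> span S" unfolding S_def by (intro span_base) blast
      then have "v2 \<bullet> (p - x0) = 0" using v2 by (simp add: orthogonal_def)
      then show "p \<bullet> l = x0 \<bullet> l" by (simp add: l_def inner_diff_right inner_commute)
    qed
    have EPl: "E P l = P" using lconst by (auto simp: E_def)
    have Fl: "F \<subseteq> E P l" using EPl F_def E_sub by blast
    have "v1 \<bullet> v2 = 0" using v2[OF v1] by (simp add: orthogonal_def inner_commute)
    then have vl: "v \<bullet> l = - (v2 \<bullet> v2)" by (simp add: vdec l_def inner_add_left)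
    have vlneg: "v \<bullet> l < 0" using vl v2ne by simp
    obtain B where B: "\<forall>x\<in>Q'. norm x \<le> B"
      using compact_imp_bounded[OF cQ'(1)] bounded_iff by blast
    define K where "K = b + B * norm a"
    define t where "t = (\<bar>K\<bar> + 1) / (- (v \<bullet> l))"
    have tpos: "t > 0" using vlneg by (simp add: t_def divide_pos_neg add_pos_nonneg)
    have tvl: "t * (v \<bullet> l) = - (\<bar>K\<bar> + 1)" using vlneg by (simp add: t_def)
    define z where "z = t *\<^sub>R l + a"
    have EPz: "E P z = Fa" unfolding z_def using E_shift[OF lconst] EPa by simp
    have fnz: "facet_normal P z" unfolding facet_normal_def using EPz Fa by (simp add: E_def)
    obtain p where p: "p \<in> Fa" using Fa by (auto simp: facet_of_def)
    obtain q where q: "q \<in> E Q' z" using E_ne[OF cQ'(1) cQ'(3)] by blast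
    have pP: "p \<in> P" "a \<bullet> p = b" using p ab(3) by auto
    have qQ: "q \<in> Q'" using q E_sub by blast
    have "x' \<in> E Q' l" using key[OF Fl] by blast
    then have ql: "q \<bullet> l \<le> x' \<bullet> l" using qQ by (auto simp: E_def)
    have "q \<bullet> a \<le> norm q * norm a" by (metis Cauchy_Schwarz_ineq2 abs_le_D1)
    also have "\<dots> \<le> B * norm a" using B qQ by (simp add: mult_right_mono)
    finally have qa: "q \<bullet> a \<le> B * norm a" .
    have "p \<bullet> z + q \<bullet> z = t * (x0 \<bullet> l) + p \<bullet> a + (t * (q \<bullet> l) + q \<bullet> a)"
      using lconst pP by (simp add: z_def inner_add_right)
    also have "\<dots> \<le> t * (x0 \<bullet> l) + b + (t * (x' \<bullet> l) + B * norm a)"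
      using pP qa ql tpos by (simp add: inner_commute mult_left_mono add_mono)
    also have "\<dots> = t * (v \<bullet> l) + K" by (simp add: K_def v_def inner_add_left algebra_simps)
    also have "\<dots> < 0" using tvl by linarith
    finally have "p \<bullet> z + q \<bullet> z < 0" .
    then have "\<exists>c. (\<forall>x\<in>P. x \<bullet> z < c) \<and> (\<forall>x\<in>Q. c < x \<bullet> z)"
      using good[of p z q] EPz p q by blast
    then show False using nog fnz by blast
  qed
  have vS: "v \<in> span S" using v1 vdec v20 by simp
  have affx: "x0 + d \<in> affine hull P" if "d \<in> span S" for d
  proof -
    have "S = insert 0 ((\<lambda>x. -x0 + x) ` (P - {x0}))" using x0P unfolding S_def by auto
    then have "span S = span ((\<lambda>x. -x0 + x) ` (P - {x0}))" by (simp add: span_insert_0)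
    then show ?thesis using affine_hull_span2[OF x0P] that by auto
  qed
  obtain Fs where Fs: "finite Fs" "P = affine hull P \<inter> \<Inter>Fs"
    and Fsh: "\<forall>h\<in>Fs. \<exists>a b. a \<noteq> 0 \<and> h = {x. a \<bullet> x \<le> b}"
    and Fsmin: "\<And>F'. F' \<subset> Fs \<Longrightarrow> P \<subset> affine hull P \<inter> \<Inter>F'"
    using polyhedron_Int_affine_minimal[THEN iffD1, OF polytope_imp_polyhedron[OF assms(1)]] by blast
  then obtain ah bh where ahb: "\<And>h. h \<in> Fs \<Longrightarrow> ah h \<noteq> 0 \<and> h = {x. ah h \<bullet> x \<le> bh h}"
    by metis
  define U where "U = (\<Inter>h\<in>{h\<in>Fs. ah h \<bullet> x0 < bh h}. {x. ah h \<bullet> x < bh h})"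
  have "open U" unfolding U_def using Fs(1) by (intro open_INT) (auto intro: open_halfspace_lt)
  moreover have "x0 \<in> U" unfolding U_def by auto
  ultimately obtain e where e: "e > 0" "ball x0 e \<subseteq> U" using open_contains_ball by blast
  define \<epsilon> where "\<epsilon> = e / (norm v + 1)"
  have nv1: "norm v + 1 > 0" by (smt (verit) norm_ge_zero)
  have epos: "\<epsilon> > 0" unfolding \<epsilon>_def using e(1) nv1 by (rule divide_pos_pos)
  define x1 where "x1 = x0 - \<epsilon> *\<^sub>R v"
  have "norm (\<epsilon> *\<^sub>R v) < e"
  proof -
    have "norm (\<epsilon> *\<^sub>R v) = e * norm v / (norm v + 1)" using epos e(1) nv1 by (simp add: \<epsilon>_def)
    also have "\<dots> < e" using e nv1 by (simp add: divide_less_eq)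
    finally show ?thesis .
  qed
  then have "x1 \<in> U" using e(2) by (auto simp: x1_def dist_norm)
  have x1aff: "x1 \<in> affine hull P"
  proof -
    have "- \<epsilon> *\<^sub>R v \<in> span S" using vS by (simp add: span_mul span_neg)
    then show ?thesis using affx unfolding x1_def by (metis diff_conv_add_uminus scaleR_minus_left)
  qed
  have x1h: "x1 \<in> h" if hF: "h \<in> Fs" for h
  proof (cases "ah h \<bullet> x0 < bh h")
    case True
    have "ah h \<bullet> x1 < bh h" using \<open>x1 \<in> U\<close> hF True unfolding U_def by auto
    then show ?thesis using ahb[OF hF] by (metis less_imp_le mem_Collect_eq)
  next
    case False
    have "x0 \<in> h" using x0P Fs(2) hF by blast
    then have "ah h \<bullet> x0 \<le> bh h" using ahb[OF hF] by (metis mem_Collect_eq)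
    then have eq: "ah h \<bullet> x0 = bh h" using False by linarith
    have Phalf: "P \<subseteq> {x. ah h \<bullet> x \<le> bh h}" using Fs(2) hF ahb[OF hF] by (metis Inf_lower inf.coboundedI2)
    have fac: "(P \<inter> {x. ah h \<bullet> x = bh h}) facet_of P"
      using facet_of_polyhedron_explicit[OF Fs(1) Fs(2) ahb Fsmin] hF by blast
    have "F \<subseteq> P \<inter> {x. ah h \<bullet> x = bh h}"
      by (rule subset_of_face_of[OF facet_of_imp_face_of[OF fac]])
         (use F_def E_sub x0 x0P eq in auto)
    moreover have EPh: "E P (ah h) = P \<inter> {x. ah h \<bullet> x = bh h}"
      using E_hyper[OF Phalf] x0P eq by blast
    ultimately have "0 \<le> v \<bullet> ah h"
      using facet_bad[of "ah h"] fac unfolding facet_normal_def by (simp add: E_def)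
    then have "ah h \<bullet> x1 \<le> bh h" using eq epos
      by (simp add: x1_def inner_diff_right inner_commute)
    then show ?thesis using ahb[OF hF] by (metis mem_Collect_eq)
  qed
  have "x1 \<in> P" using Fs(2) x1aff x1h by blast
  then have "x1 \<bullet> y0 \<le> x0 \<bullet> y0" using x0F F_def by (auto simp: E_def)
  then have "0 \<le> \<epsilon> * (v \<bullet> y0)" by (simp add: x1_def inner_diff_left)
  then show False using epos vy0 by (simp add: zero_le_mult_iff)
qed
end
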